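(* Let $G$ be a $\Delta$-regular graph on $n$ vertices in which every two adjacent vertices have at least $\lambda$ common neighbors. (i) If $\Delta-\lambda\equiv0\pmod 2$, then $\alpha_{\mathrm{od}}(G)\le\frac{\Delta-\lambda-1}{2\Delta-\lambda-1}n$. (ii) If $\Delta-\lambda\equiv1\pmod2$, then $\alpha_{\mathrm{od}}(G)\le\frac{\Delta-\lambda}{2\Delta-\lambda}n$.
   Context: An odd independent set in $G=(V,E)$ is an independent set $S$ such that every $v\in V\setminus S$ has either no neighbor or an odd number of neighbors in $S$; $\alpha_{\mathrm{od}}(G)$ is its maximum size. *)

theory Defs
  imports Complex_Main
begin

definition simple_graph :: "'a set \<Rightarrow> ('a \<Rightarrow> 'a \<Rightarrow> bool) \<Rightarrow> bool" where
  "simple_graph V E \<longleftrightarrow> finite V \<and> (\<forall>u v. E u v \<longrightarrow> u \<in> V \<and> v \<in> V)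
     \<and> (\<forall>u v. E u v \<longrightarrow> E v u) \<and> (\<forall>v. \<not> E v v)"

definition nbrs :: "'a set \<Rightarrow> ('a \<Rightarrow> 'a \<Rightarrow> bool) \<Rightarrow> 'a \<Rightarrow> 'a set" where
  "nbrs V E v = {u \<in> V. E v u}"

definition regular_graph :: "'a set \<Rightarrow> ('a \<Rightarrow> 'a \<Rightarrow> bool) \<Rightarrow> nat \<Rightarrow> bool" where
  "regular_graph V E d \<longleftrightarrow> (\<forall>v \<in> V. card (nbrs V E v) = d)"

definition independent_set :: "'a set \<Rightarrow> ('a \<Rightarrow> 'a \<Rightarrow> bool) \<Rightarrow> 'a set \<Rightarrow> bool" where
  "independent_set V E S \<longleftrightarrow> S \<subseteq> V \<and> (\<forall>u \<in> S. \<forall>v \<in> S. \<not> E u v)"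

definition odd_independent_set :: "'a set \<Rightarrow> ('a \<Rightarrow> 'a \<Rightarrow> bool) \<Rightarrow> 'a set \<Rightarrow> bool" where
  "odd_independent_set V E S \<longleftrightarrow> independent_set V E S \<and>
     (\<forall>v \<in> V - S. card (nbrs V E v \<inter> S) = 0 \<or> odd (card (nbrs V E v \<inter> S)))"

definition alpha_od :: "'a set \<Rightarrow> ('a \<Rightarrow> 'a \<Rightarrow> bool) \<Rightarrow> nat" where
  "alpha_od V E = Max {card S | S. odd_independent_set V E S}"

end

theory Submission
  imports Defs
begin

lemma card_filter_sum:
  assumes "finite A"
  shows "card {x\<in>A. P x} = (\<Sum>x\<in>A. if P x then 1 else (0::nat))"
  using assms by (simp add: sum.inter_filter[symmetric])

lemma double_count:
  assumes "finite A" "finite B"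
  shows "(\<Sum>v\<in>A. card {u\<in>B. R v u}) = (\<Sum>u\<in>B. card {v\<in>A. R v u})"
proof -
  have "(\<Sum>v\<in>A. card {u\<in>B. R v u}) = (\<Sum>v\<in>A. \<Sum>u\<in>B. if R v u then 1 else (0::nat))"
    using assms by (simp add: card_filter_sum)
  also have "\<dots> = (\<Sum>u\<in>B. \<Sum>v\<in>A. if R v u then 1 else (0::nat))"
    by (rule sum.swap)
  also have "\<dots> = (\<Sum>u\<in>B. card {v\<in>A. R v u})"
    using assms by (simp add: card_filter_sum)
  finally show ?thesis .
qed

lemma main_bound:
  fixes V :: "'a set" and E :: "'a \<Rightarrow> 'a \<Rightarrow> bool" and D lam c :: nat
  assumes G: "simple_graph V E"
    and R: "regular_graph V E D"
    and L: "\<forall>u \<in> V. \<forall>v \<in> V. E u v \<longrightarrow> card (nbrs V E u \<inter> nbrs V E v) \<ge> lam"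
    and S: "odd_independent_set V E S"
    and c: "\<And>k. k + lam \<le> D \<Longrightarrow> odd k \<Longrightarrow> k \<le> c"
  shows "card S * (D + c) \<le> c * card V"
proof -
  have fin: "finite V" using G by (simp add: simple_graph_def)
  have SV: "S \<subseteq> V" using S by (simp add: odd_independent_set_def independent_set_def)
  have finS: "finite S" using fin SV finite_subset by blast
  have ind: "\<forall>u\<in>S. \<forall>v\<in>S. \<not> E u v" using S by (simp add: odd_independent_set_def independent_set_def)
  have sym: "\<And>u v. E u v \<Longrightarrow> E v u" using G by (simp add: simple_graph_def)
  have inV: "\<And>u v. E u v \<Longrightarrow> u \<in> V \<and> v \<in> V" using G by (simp add: simple_graph_def)
  have kb: "card (nbrs V E v \<inter> S) \<le> c" if v: "v \<in> V - S" for v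
  proof (cases "card (nbrs V E v \<inter> S) = 0")
    case True then show ?thesis by simp
  next
    case False
    have "\<forall>w\<in>V - S. card (nbrs V E w \<inter> S) = 0 \<or> odd (card (nbrs V E w \<inter> S))"
      using S by (simp add: odd_independent_set_def)
    note oi = this
    have oddk: "odd (card (nbrs V E v \<inter> S))"
      using bspec[OF oi v] False by simp
    from False obtain u where u: "u \<in> nbrs V E v \<inter> S"
      by (metis card.empty ex_in_conv)
    have Evu: "E v u" "u \<in> S" using u by (auto simp: nbrs_def)
    have "lam \<le> card (nbrs V E u \<inter> nbrs V E v)"
      using L Evu sym inV by blast
    moreover have "nbrs V E u \<inter> nbrs V E v \<subseteq> nbrs V E v - S"
      using ind Evu by (auto simp: nbrs_def)
    moreover have finN: "finite (nbrs V E v)" using fin by (simp add: nbrs_def)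
    ultimately have "lam \<le> card (nbrs V E v - S)"
      using card_mono[of "nbrs V E v - S" "nbrs V E u \<inter> nbrs V E v"] by auto
    moreover have "card (nbrs V E v \<inter> S) + card (nbrs V E v - S) = card (nbrs V E v)"
      using card_Int_Diff[OF finN] by simp
    moreover have "card (nbrs V E v) = D" using R v by (simp add: regular_graph_def)
    ultimately have "card (nbrs V E v \<inter> S) + lam \<le> D" by linarith
    then show ?thesis using c oddk by blast
  qed
  have "(\<Sum>v\<in>V - S. card {u\<in>S. E v u}) = (\<Sum>u\<in>S. card {v\<in>V - S. E v u})"
    using fin finS by (intro double_count) auto
  moreover have "\<And>v. v \<in> V - S \<Longrightarrow> {u\<in>S. E v u} = nbrs V E v \<inter> S"
    using SV by (auto simp: nbrs_def)
  moreover have "\<And>u. u \<in> S \<Longrightarrow> {v\<in>V - S. E v u} = nbrs V E u"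
    using SV ind sym inV by (auto simp: nbrs_def)
  ultimately have eq: "(\<Sum>v\<in>V - S. card (nbrs V E v \<inter> S)) = (\<Sum>u\<in>S. card (nbrs V E u))"
    by (metis (no_types, lifting) sum.cong)
  have "(\<Sum>u\<in>S. card (nbrs V E u)) = card S * D"
    using R SV by (simp add: regular_graph_def subset_iff)
  moreover have "(\<Sum>v\<in>V - S. card (nbrs V E v \<inter> S)) \<le> (\<Sum>v\<in>V - S. c)"
    by (intro sum_mono kb)
  moreover have "(\<Sum>v\<in>V - S. c) = (card V - card S) * c"
    using fin SV by (simp add: card_Diff_subset finS)
  moreover have "card S \<le> card V" using fin SV card_mono by blast
  moreover have "card (V - S) = card V - card S" using card_Diff_subset[OF finS SV] .
  ultimately have "card S * D \<le> (card V - card S) * c" using eq by simp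
  moreover have "c * card S \<le> c * card V" using \<open>card S \<le> card V\<close> by simp
  ultimately have "D * card S \<le> c * card V - c * card S" "c * card S \<le> c * card V"
    by (simp_all add: algebra_simps diff_mult_distrib)
  then have "D * card S + c * card S \<le> c * card V" by linarith
  then show ?thesis by (simp add: algebra_simps)
qed

lemma alpha_attained:
  assumes G: "simple_graph V E"
  shows "\<exists>S. odd_independent_set V E S \<and> alpha_od V E = card S"
proof -
  have fin: "finite V" using G by (simp add: simple_graph_def)
  let ?A = "{card S | S. odd_independent_set V E S}"
  have "?A \<subseteq> {0..card V}"
    using fin by (auto simp: odd_independent_set_def independent_set_def intro: card_mono)
  then have "finite ?A" using finite_subset by blast
  moreover have "odd_independent_set V E {}"
    by (simp add: odd_independent_set_def independent_set_def)
  then have "?A \<noteq> {}" by blast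
  ultimately have "Max ?A \<in> ?A" by (rule Max_in)
  then show ?thesis unfolding alpha_od_def by auto
qed

lemma div_bound:
  fixes s n D c :: nat
  assumes "s * (D + c) \<le> c * n" "D + c > 0"
  shows "real s \<le> real c / (real D + real c) * real n"
proof -
  have "real s * (real D + real c) \<le> real c * real n"
    using assms(1) by (metis of_nat_add of_nat_le_iff of_nat_mult)
  moreover have "real (D + c) > 0" using assms(2) by (simp only: of_nat_0_less_iff)
  then have "real D + real c > 0" by simp
  ultimately show ?thesis by (simp add: field_simps)
qed

theorem proposition5:
  fixes V :: "'a set" and E :: "'a \<Rightarrow> 'a \<Rightarrow> bool" and D lam :: nat
  assumes "simple_graph V E"
    and "regular_graph V E D"
    and "\<forall>u \<in> V. \<forall>v \<in> V. E u v \<longrightarrow> card (nbrs V E u \<inter> nbrs V E v) \<ge> lam"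
  shows "(even (int D - int lam) \<longrightarrow>
           real (alpha_od V E) \<le> (real D - real lam - 1) / (2 * real D - real lam - 1) * real (card V))
       \<and> (odd (int D - int lam) \<longrightarrow>
           real (alpha_od V E) \<le> (real D - real lam) / (2 * real D - real lam) * real (card V))"
proof -
  note G = assms(1) and R = assms(2) and L = assms(3)
  obtain S where S: "odd_independent_set V E S" and al: "alpha_od V E = card S"
    using alpha_attained[OF G] by blast
  have fin: "finite V" using G by (simp add: simple_graph_def)
  have SV: "S \<subseteq> V" using S by (simp add: odd_independent_set_def independent_set_def)
  have sle: "card S \<le> card V" using card_mono[OF fin SV] .
  show ?thesis
  proof (cases "V = {} \<or> D = 0")
    case True
    show ?thesis
    proof (cases "V = {}")
      case True
      then have "card S = 0" using SV by auto
      then show ?thesis using al True by simp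
    next
      case False
      then have D0: "D = 0" using True by blast
      have e: "even (int D - int lam) \<longrightarrow> (real D - real lam - 1) / (2 * real D - real lam - 1) = 1"
        using D0 by simp
      have o: "odd (int D - int lam) \<longrightarrow> (real D - real lam) / (2 * real D - real lam) = 1"
        using D0 by (cases "lam = 0") auto
      have a1: "real (alpha_od V E) \<le> 1 * real (card V)" using al sle by simp
      show ?thesis
      proof (intro conjI impI)
        assume h: "even (int D - int lam)"
        show "real (alpha_od V E) \<le> (real D - real lam - 1) / (2 * real D - real lam - 1) * real (card V)"
          using e h a1 by metis
      next
        assume h: "odd (int D - int lam)"
        show "real (alpha_od V E) \<le> (real D - real lam) / (2 * real D - real lam) * real (card V)"
          using o h a1 by metis
      qed
    qed
  next
    case False
    then obtain w where w: "w \<in> V" and Dp: "D > 0" by blast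
    have "card (nbrs V E w) = D" using R w by (simp add: regular_graph_def)
    then obtain x where x: "x \<in> nbrs V E w"
      using Dp by (metis card.empty ex_in_conv less_irrefl)
    have Ewx: "E w x" "x \<in> V" using x by (auto simp: nbrs_def)
    have "lam \<le> card (nbrs V E w \<inter> nbrs V E x)" using L w Ewx by blast
    moreover have "nbrs V E w \<inter> nbrs V E x \<subseteq> nbrs V E w - {x}"
      using G by (auto simp: nbrs_def simple_graph_def)
    moreover have finN: "finite (nbrs V E w)" using fin by (simp add: nbrs_def)
    ultimately have "lam \<le> card (nbrs V E w - {x})"
      using card_mono[of "nbrs V E w - {x}" "nbrs V E w \<inter> nbrs V E x"] by auto
    also have "\<dots> = D - 1" using x \<open>card (nbrs V E w) = D\<close> finN by simp
    finally have lamD: "lam < D" using Dp by linarith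
    have part1: "real (alpha_od V E) \<le> (real D - real lam - 1) / (2 * real D - real lam - 1) * real (card V)"
      if ev: "even (int D - int lam)"
    proof -
      have evn: "even (D - lam)" using ev lamD
        by (metis le_less of_nat_diff lamD even_of_nat)
      have "card S * (D + (D - lam - 1)) \<le> (D - lam - 1) * card V"
      proof (rule main_bound[OF G R L S])
        fix k assume "k + lam \<le> D" "odd k"
        then have "k \<noteq> D - lam" using evn by auto
        then show "k \<le> D - lam - 1" using \<open>k + lam \<le> D\<close> by linarith
      qed
      then have "real (card S) \<le> real (D - lam - 1) / (real D + real (D - lam - 1)) * real (card V)"
        by (rule div_bound) (use Dp in simp)
      moreover have "real (D - lam - 1) = real D - real lam - 1" using lamD by (simp add: of_nat_diff)
      ultimately show ?thesis using al by (simp add: algebra_simps)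
    qed
    have part2: "real (alpha_od V E) \<le> (real D - real lam) / (2 * real D - real lam) * real (card V)"
    proof -
      have "card S * (D + (D - lam)) \<le> (D - lam) * card V"
      proof (rule main_bound[OF G R L S])
        fix k assume "k + lam \<le> D" "odd k"
        then show "k \<le> D - lam" by linarith
      qed
      then have "real (card S) \<le> real (D - lam) / (real D + real (D - lam)) * real (card V)"
        by (rule div_bound) (use Dp in simp)
      moreover have "real (D - lam) = real D - real lam" using lamD by (simp add: of_nat_diff)
      ultimately show ?thesis using al by (simp add: algebra_simps)
    qed
    show ?thesis using part1 part2 by blast
  qed
qed

end
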